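(* Let $G=\bigl((f_j)_{j=1}^n;(R^i)_{i=1}^k;(f^i_j)_{i\in[k],\,j\in R^i}\bigr)$ be a resource selection game with I.D.-dependent weighting. If all functions $f_j$ ($j\in[n]$) and $f^i_j$ ($i\in[k]$, $j\in R^i$) are continuous, then a strong Nash equilibrium exists in $G$.
   Context: For $n,k\in\mathbb{N}$, an $n$-resource/$k$-player-type resource selection game with I.D.-dependent weighting is a triple $\bigl((f_j)_{j=1}^n;(R^i)_{i=1}^k;(f^i_j)_{i\in[k],j\in R^i}\bigr)$ where each $f_j:[0,\infty)\to\mathbb{R}$ is nondecreasing, each $R^i$ is a nonempty subset of $[n]$, and each $f^i_j:[0,1]\to[0,\infty)$ is increasing. A consumption profile is a map $s:[k]\to[0,\infty)^{[n]}$ with $s_j(i)=0$ for $j\notin R^i$ and $\sum_j s_j(i)=1$ (the fraction of type-$i$ players using resource $j$). The weighted load of resource $j$ is $\mu^s_j=\sum_{i:\,j\in R^i}f^i_j(s_j(i))$ and its cost is $h^s_j=f_j(\mu^s_j)$. $s$ is a Nash equilibrium if for every $i\in[k]$, every $\ell$ with $s_\ell(i)>0$ and every $j\in R^i$, $h^s_\ell\le h^s_j$. For a Nash equilibrium $s$ and $i\in[k]$, let $h^i=h^s_\ell$ for any $\ell$ with $s_\ell(i)>0$. A Nash equilibrium $s$ is strong if there is no consumption profile $s'\ne s$ such that for every $i\in[k]$ and every $\ell$ with $s'_\ell(i)>s_\ell(i)$, $h^{s'}_\ell<h^i$. *)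

theory Defs
  imports "HOL-Analysis.Analysis"
begin

text \<open>Resources are indexed by [n] = {1..n}, player types by [k] = {1..k}.
  f j : cost function of resource j;  R i : the set of resources available to type i;
  w i j : the weighting function f^i_j.  A consumption profile is s :: nat => nat => real,
  where s i j is the fraction s_j(i) of type-i players using resource j; it is required
  to vanish outside [k] x [n] so that equality of profiles is equality of maps on [k].\<close>

definition rsg_game :: "nat \<Rightarrow> nat \<Rightarrow> (nat \<Rightarrow> real \<Rightarrow> real) \<Rightarrow> (nat \<Rightarrow> nat set)
    \<Rightarrow> (nat \<Rightarrow> nat \<Rightarrow> real \<Rightarrow> real) \<Rightarrow> bool" where
  "rsg_game n k f R w \<longleftrightarrow>
     (\<forall>j\<in>{1..n}. mono_on {0..} (f j)) \<and>
     (\<forall>i\<in>{1..k}. R i \<noteq> {} \<and> R i \<subseteq> {1..n}) \<and>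
     (\<forall>i\<in>{1..k}. \<forall>j\<in>R i. strict_mono_on {0..1} (w i j) \<and> (\<forall>x\<in>{0..1}. w i j x \<ge> 0))"

definition consumption_profile :: "nat \<Rightarrow> nat \<Rightarrow> (nat \<Rightarrow> nat set) \<Rightarrow> (nat \<Rightarrow> nat \<Rightarrow> real) \<Rightarrow> bool" where
  "consumption_profile n k R s \<longleftrightarrow>
     (\<forall>i j. s i j \<noteq> 0 \<longrightarrow> i \<in> {1..k} \<and> j \<in> {1..n}) \<and>
     (\<forall>i\<in>{1..k}. (\<forall>j\<in>{1..n}. s i j \<ge> 0 \<and> (j \<notin> R i \<longrightarrow> s i j = 0))
                  \<and> (\<Sum>j\<in>{1..n}. s i j) = 1)"

definition load :: "nat \<Rightarrow> (nat \<Rightarrow> nat set) \<Rightarrow> (nat \<Rightarrow> nat \<Rightarrow> real \<Rightarrow> real)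
    \<Rightarrow> (nat \<Rightarrow> nat \<Rightarrow> real) \<Rightarrow> nat \<Rightarrow> real" where
  "load k R w s j = (\<Sum>i\<in>{i\<in>{1..k}. j \<in> R i}. w i j (s i j))"

definition cost :: "nat \<Rightarrow> (nat \<Rightarrow> real \<Rightarrow> real) \<Rightarrow> (nat \<Rightarrow> nat set) \<Rightarrow> (nat \<Rightarrow> nat \<Rightarrow> real \<Rightarrow> real)
    \<Rightarrow> (nat \<Rightarrow> nat \<Rightarrow> real) \<Rightarrow> nat \<Rightarrow> real" where
  "cost k f R w s j = f j (load k R w s j)"

definition nash_eq :: "nat \<Rightarrow> nat \<Rightarrow> (nat \<Rightarrow> real \<Rightarrow> real) \<Rightarrow> (nat \<Rightarrow> nat set)
    \<Rightarrow> (nat \<Rightarrow> nat \<Rightarrow> real \<Rightarrow> real) \<Rightarrow> (nat \<Rightarrow> nat \<Rightarrow> real) \<Rightarrow> bool" where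
  "nash_eq n k f R w s \<longleftrightarrow> consumption_profile n k R s \<and>
     (\<forall>i\<in>{1..k}. \<forall>l\<in>{1..n}. s i l > 0 \<longrightarrow> (\<forall>j\<in>R i. cost k f R w s l \<le> cost k f R w s j))"

text \<open>h^i: the cost of (any) resource used by type i.\<close>
definition type_cost :: "nat \<Rightarrow> nat \<Rightarrow> (nat \<Rightarrow> real \<Rightarrow> real) \<Rightarrow> (nat \<Rightarrow> nat set)
    \<Rightarrow> (nat \<Rightarrow> nat \<Rightarrow> real \<Rightarrow> real) \<Rightarrow> (nat \<Rightarrow> nat \<Rightarrow> real) \<Rightarrow> nat \<Rightarrow> real" where
  "type_cost n k f R w s i = cost k f R w s (SOME l. l \<in> {1..n} \<and> s i l > 0)"

definition strong_nash_eq :: "nat \<Rightarrow> nat \<Rightarrow> (nat \<Rightarrow> real \<Rightarrow> real) \<Rightarrow> (nat \<Rightarrow> nat set)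
    \<Rightarrow> (nat \<Rightarrow> nat \<Rightarrow> real \<Rightarrow> real) \<Rightarrow> (nat \<Rightarrow> nat \<Rightarrow> real) \<Rightarrow> bool" where
  "strong_nash_eq n k f R w s \<longleftrightarrow> nash_eq n k f R w s \<and>
     \<not> (\<exists>s'. consumption_profile n k R s' \<and> s' \<noteq> s \<and>
           (\<forall>i\<in>{1..k}. \<forall>l\<in>{1..n}. s' i l > s i l \<longrightarrow>
               cost k f R w s' l < type_cost n k f R w s i))"

end

theory Submission
  imports Defs
begin


lemma coord_cont: "continuous_on UNIV (\<lambda>s::nat\<Rightarrow>nat\<Rightarrow>real. s i j)"
proof -
  have "continuous_on UNIV (\<lambda>s::nat\<Rightarrow>nat\<Rightarrow>real. s i)" by simp
  then show ?thesis by (rule continuous_on_product_then_coordinatewise)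
qed

lemma box_compact: "compact {s::nat\<Rightarrow>nat\<Rightarrow>real. \<forall>i j. s i j \<in> {0..1}}"
proof -
  have c1: "compact (PiE UNIV (\<lambda>j::nat. {0..1::real}))"
    using compactin_PiE[of "\<lambda>j::nat. euclidean" UNIV "\<lambda>j. {0..1::real}"]
    by (simp add: euclidean_product_topology)
  have "compact (PiE UNIV (\<lambda>i::nat. PiE UNIV (\<lambda>j::nat. {0..1::real})))"
    using compactin_PiE[of "\<lambda>j::nat. euclidean" UNIV "\<lambda>i::nat. PiE UNIV (\<lambda>j::nat. {0..1::real})"] c1
    by (simp add: euclidean_product_topology)
  moreover have "PiE UNIV (\<lambda>i::nat. PiE UNIV (\<lambda>j::nat. {0..1::real})) = {s::nat\<Rightarrow>nat\<Rightarrow>real. \<forall>i j. s i j \<in> {0..1}}"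
    by (auto simp: PiE_iff)
  ultimately show ?thesis by simp
qed

lemma tendsto_univ: "continuous_on UNIV g \<Longrightarrow> (X \<longlongrightarrow> a) F \<Longrightarrow> ((\<lambda>m. g (X m)) \<longlongrightarrow> g a) F"
  using continuous_on_tendsto_compose[of UNIV g X a F] by simp


lemma cp_D1: "consumption_profile n k R s \<Longrightarrow> s i j \<noteq> 0 \<Longrightarrow> i \<in> {1..k} \<and> j \<in> {1..n}"
  unfolding consumption_profile_def by (drule conjunct1) (drule spec, drule spec, erule mp)
lemma cp_D234: "consumption_profile n k R s \<Longrightarrow> i \<in> {1..k} \<Longrightarrow> (\<forall>j\<in>{1..n}. s i j \<ge> 0 \<and> (j \<notin> R i \<longrightarrow> s i j = 0)) \<and> (\<Sum>j\<in>{1..n}. s i j) = 1"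
  unfolding consumption_profile_def by (drule conjunct2) (erule bspec)
lemma cp_D2: "consumption_profile n k R s \<Longrightarrow> i \<in> {1..k} \<Longrightarrow> j \<in> {1..n} \<Longrightarrow> s i j \<ge> 0"
  using cp_D234 by blast
lemma cp_D4: "consumption_profile n k R s \<Longrightarrow> i \<in> {1..k} \<Longrightarrow> (\<Sum>j\<in>{1..n}. s i j) = 1"
  using cp_D234 by blast
lemma cp_D3: "consumption_profile n k R s \<Longrightarrow> i \<in> {1..k} \<Longrightarrow> j \<notin> R i \<Longrightarrow> s i j = 0"
  using cp_D234 cp_D1 by blast
lemma cp_I: "(\<And>i j. s i j \<noteq> 0 \<Longrightarrow> i \<in> {1..k} \<and> j \<in> {1..n}) \<Longrightarrow>
   (\<And>i j. i \<in> {1..k} \<Longrightarrow> j \<in> {1..n} \<Longrightarrow> s i j \<ge> 0) \<Longrightarrow>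
   (\<And>i j. i \<in> {1..k} \<Longrightarrow> j \<in> {1..n} \<Longrightarrow> j \<notin> R i \<Longrightarrow> s i j = 0) \<Longrightarrow>
   (\<And>i. i \<in> {1..k} \<Longrightarrow> (\<Sum>j\<in>{1..n}. s i j) = 1) \<Longrightarrow> consumption_profile n k R s"
  unfolding consumption_profile_def by blast
lemma closed_pre: "continuous_on UNIV f \<Longrightarrow> closed B \<Longrightarrow> closed {x. f x \<in> B}"
  using continuous_on_closed_vimage[of UNIV f] by (simp add: vimage_def)




definition clamp :: "real \<Rightarrow> real" where "clamp x = min 1 (max 0 x)"

lemma clamp_cont: "continuous_on UNIV clamp"
  unfolding clamp_def by (intro continuous_intros)

lemma clamp_in: "clamp x \<in> {0..1}" unfolding clamp_def by auto

lemma clamp_id: "x \<in> {0..1} \<Longrightarrow> clamp x = x" unfolding clamp_def by auto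

lemma cont_Max:
  fixes g :: "'i \<Rightarrow> 'a::topological_space \<Rightarrow> real"
  assumes "finite I" "I \<noteq> {}" "\<And>i. i \<in> I \<Longrightarrow> continuous_on A (g i)"
  shows "continuous_on A (\<lambda>x. Max ((\<lambda>i. g i x) ` I))"
  using assms
proof (induction I rule: finite_ne_induct)
  case (singleton a) then show ?case by simp
next
  case (insert a F)
  have "(\<lambda>x. Max ((\<lambda>i. g i x) ` insert a F)) = (\<lambda>x. max (g a x) (Max ((\<lambda>i. g i x) ` F)))"
    using insert by (auto simp: Max_insert)
  then show ?case using insert by (auto intro!: continuous_intros)
qed

lemma cont_Min:
  fixes g :: "'i \<Rightarrow> 'a::topological_space \<Rightarrow> real"
  assumes "finite I" "I \<noteq> {}" "\<And>i. i \<in> I \<Longrightarrow> continuous_on A (g i)"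
  shows "continuous_on A (\<lambda>x. Min ((\<lambda>i. g i x) ` I))"
  using assms
proof (induction I rule: finite_ne_induct)
  case (singleton a) then show ?case by simp
next
  case (insert a F)
  have "(\<lambda>x. Min ((\<lambda>i. g i x) ` insert a F)) = (\<lambda>x. min (g a x) (Min ((\<lambda>i. g i x) ` F)))"
    using insert by (auto simp: Min_insert)
  then show ?case using insert by (auto intro!: continuous_intros)
qed

locale G =
  fixes n k :: nat and R :: "nat \<Rightarrow> nat set" and w :: "nat\<Rightarrow>nat\<Rightarrow>real\<Rightarrow>real"
  assumes R: "\<forall>i\<in>{1..k}. R i \<noteq> {} \<and> R i \<subseteq> {1..n}"
    and wm: "\<forall>i\<in>{1..k}. \<forall>j\<in>R i. strict_mono_on {0..1} (w i j) \<and> (\<forall>x\<in>{0..1}. w i j x \<ge> 0)"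
    and wc: "\<forall>i\<in>{1..k}. \<forall>j\<in>R i. continuous_on {0..1} (w i j)"
begin

definition P :: "(nat\<Rightarrow>nat\<Rightarrow>real) set" where "P = {s. consumption_profile n k R s}"

definition ll :: "(nat\<Rightarrow>nat\<Rightarrow>real) \<Rightarrow> nat \<Rightarrow> real" where
  "ll s j = (\<Sum>i\<in>{i\<in>{1..k}. j \<in> R i}. w i j (clamp (s i j)))"

definition cc :: "(nat \<Rightarrow> real \<Rightarrow> real) \<Rightarrow> (nat\<Rightarrow>nat\<Rightarrow>real) \<Rightarrow> nat \<Rightarrow> real" where
  "cc f s j = f j (ll s j)"

lemma P_D1: "s \<in> P \<Longrightarrow> s i j \<noteq> 0 \<Longrightarrow> i \<in> {1..k} \<and> j \<in> {1..n}"
  unfolding P_def using cp_D1 by blast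
lemma P_D2: "s \<in> P \<Longrightarrow> i \<in> {1..k} \<Longrightarrow> j \<in> {1..n} \<Longrightarrow> s i j \<ge> 0"
  unfolding P_def using cp_D2 by blast
lemma P_D3: "s \<in> P \<Longrightarrow> i \<in> {1..k} \<Longrightarrow> j \<notin> R i \<Longrightarrow> s i j = 0"
  unfolding P_def using cp_D3 by blast
lemma P_D4: "s \<in> P \<Longrightarrow> i \<in> {1..k} \<Longrightarrow> (\<Sum>j\<in>{1..n}. s i j) = 1"
  unfolding P_def using cp_D4 by blast

lemma P_nonneg: "s \<in> P \<Longrightarrow> s i j \<ge> 0"
  using P_D1[of s i j] P_D2[of s i j] by force

lemma P_le1: assumes "s \<in> P" shows "s i j \<le> 1"
proof (cases "s i j = 0")
  case False
  then have ij: "i \<in> {1..k}" "j \<in> {1..n}" using P_D1[OF assms] by auto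
  have "s i j \<le> (\<Sum>j\<in>{1..n}. s i j)"
    by (rule member_le_sum) (use ij P_nonneg[OF assms] in auto)
  then show ?thesis using P_D4[OF assms ij(1)] by simp
qed simp

lemma P_used_R: "s \<in> P \<Longrightarrow> i \<in> {1..k} \<Longrightarrow> s i j > 0 \<Longrightarrow> j \<in> R i"
  using P_D3 by force

lemma ll_eq: "s \<in> P \<Longrightarrow> ll s j = load k R w s j"
  unfolding ll_def load_def
  by (rule sum.cong) (auto simp: clamp_id P_nonneg P_le1)

lemma cc_eq: "s \<in> P \<Longrightarrow> cc f s j = cost k f R w s j"
  unfolding cc_def cost_def using ll_eq by simp

lemma ll_nonneg: "ll s j \<ge> 0"
  unfolding ll_def using wm clamp_in by (intro sum_nonneg) auto

lemma ll_cont: "continuous_on UNIV (\<lambda>s. ll s j)"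
  unfolding ll_def
proof (intro continuous_on_sum)
  fix i assume i: "i \<in> {i\<in>{1..k}. j \<in> R i}"
  have "continuous_on UNIV (\<lambda>s::nat\<Rightarrow>nat\<Rightarrow>real. clamp (s i j))"
    using continuous_on_compose2[OF clamp_cont coord_cont] by auto
  then show "continuous_on UNIV (\<lambda>s::nat\<Rightarrow>nat\<Rightarrow>real. w i j (clamp (s i j)))"
    using continuous_on_compose2[of "{0..1}" "w i j"] wc i clamp_in by blast
qed

lemma cc_cont: "continuous_on {0..} (f j) \<Longrightarrow> continuous_on UNIV (\<lambda>s. cc f s j)"
  unfolding cc_def
  using continuous_on_compose2[OF _ ll_cont, of "{0..}" "f j"] ll_nonneg by auto

lemma P_closed: "closed P"
proof -
  have "P = (\<Inter>i. \<Inter>j. {s. s i j \<in> (if i\<in>{1..k} \<and> j \<in> R i then {0..} else {0})})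
           \<inter> (\<Inter>i\<in>{1..k}. {s. (\<Sum>j\<in>{1..n}. s i j) \<in> {1}})" (is "P = ?Q")
  proof
    show "P \<subseteq> ?Q"
    proof
      fix s assume s: "s \<in> P"
      have "s i j \<in> (if i\<in>{1..k} \<and> j \<in> R i then {0..} else {0})" for i j
      proof (cases "i\<in>{1..k} \<and> j \<in> R i")
        case True
        then have "j \<in> {1..n}" using R by blast
        then show ?thesis using True P_D2[OF s, of i j] by auto
      next
        case False
        have "s i j = 0"
        proof (rule ccontr)
          assume "s i j \<noteq> 0"
          then have "i \<in> {1..k}" "j \<in> R i" using P_D1[OF s, of i j] P_D3[OF s, of i j] by blast+
          then show False using False by blast
        qed
        then show ?thesis using False by simp
      qed
      then show "s \<in> ?Q" using P_D4[OF s] by (intro IntI INT_I) (simp_all only: mem_Collect_eq singleton_iff)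
    qed
  next
    show "?Q \<subseteq> P"
    proof
      fix s assume s: "s \<in> ?Q"
      then have a: "s i j \<in> (if i\<in>{1..k} \<and> j \<in> R i then {0..} else {0})" for i j by blast
      show "s \<in> P" unfolding P_def mem_Collect_eq
      proof (rule cp_I)
        fix i j assume h: "s i j \<noteq> 0"
        show "i \<in> {1..k} \<and> j \<in> {1..n}"
        proof (cases "i\<in>{1..k} \<and> j \<in> R i")
          case True then show ?thesis using R by blast
        next
          case False then have "s i j \<in> {0}" using a[of i j] by (simp only: if_not_P[OF False] if_False)
          then show ?thesis using h by simp
        qed
      next
        fix i j show "0 \<le> s i j"
        proof (cases "i\<in>{1..k} \<and> j \<in> R i")
          case True then have "s i j \<in> {0..}" using a[of i j] by (simp only: if_P[OF True] if_True simp_thms)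
          then show ?thesis by simp
        next
          case False then have "s i j \<in> {0}" using a[of i j] by (simp only: if_not_P[OF False] if_False)
          then show ?thesis by simp
        qed
      next
        fix i j assume "j \<notin> R i"
        then have nP: "\<not> (i\<in>{1..k} \<and> j \<in> R i)" by blast
        have "s i j \<in> {0}" using a[of i j] by (simp only: if_not_P[OF nP] if_False)
        then show "s i j = 0" by simp
      next
        fix i assume "i \<in> {1..k}"
        then have "s \<in> {s. (\<Sum>j\<in>{1..n}. s i j) \<in> {1}}" by (rule INT_D[OF IntD2[OF s]])
        then show "(\<Sum>j\<in>{1..n}. s i j) = 1" by simp
      qed
    qed
  qed
  moreover have cl1: "closed {s::nat\<Rightarrow>nat\<Rightarrow>real. s i j \<in> C}" if "closed C" for i j C
    by (rule closed_pre[OF coord_cont that])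
  moreover have cl2: "closed {s::nat\<Rightarrow>nat\<Rightarrow>real. (\<Sum>j\<in>{1..n}. s i j) \<in> {1}}" for i
    by (rule closed_pre[OF continuous_on_sum[OF coord_cont] closed_singleton])
  ultimately have c1: "closed {s::nat\<Rightarrow>nat\<Rightarrow>real. s i j \<in> (if i\<in>{1..k} \<and> j \<in> R i then {0..} else {0})}" for i j
    by (intro cl1) (simp only: if_split closed_atLeast closed_singleton, simp)
  have "closed ?Q"
    apply (rule closed_Int)
     apply (rule closed_INT, rule ballI, rule closed_INT, rule ballI, rule c1)
    apply (rule closed_INT, rule ballI, rule cl2)
    done
  then show ?thesis using \<open>P = ?Q\<close> by simp
qed

lemma P_compact: "compact P"
proof -
  have "P \<subseteq> {s::nat\<Rightarrow>nat\<Rightarrow>real. \<forall>i j. s i j \<in> {0..1}}"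
    using P_nonneg P_le1 by auto
  then have "P = {s::nat\<Rightarrow>nat\<Rightarrow>real. \<forall>i j. s i j \<in> {0..1}} \<inter> P" by auto
  then show ?thesis using compact_Int_closed[OF box_compact P_closed] by simp
qed

lemma P_nonempty: "P \<noteq> {}"
proof -
  define s where "s = (\<lambda>i j. if i \<in> {1..k} \<and> j = (LEAST j. j \<in> R i) then 1 else (0::real))"
  have L: "(LEAST j. j \<in> R i) \<in> R i" if "i \<in> {1..k}" for i
    using R that by (meson LeastI ex_in_conv)
  have "s \<in> P"
    unfolding P_def mem_Collect_eq
  proof (rule cp_I)
    fix i j assume "s i j \<noteq> 0"
    then have i: "i \<in> {1..k}" and j: "j = (LEAST j. j \<in> R i)" unfolding s_def by (meson)+
    have "j \<in> R i" using L[OF i] j by simp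
    then show "i \<in> {1..k} \<and> j \<in> {1..n}" using R i by blast
  next
    fix i j show "0 \<le> s i j" unfolding s_def by auto
  next
    fix i j assume "i \<in> {1..k}" "j \<notin> R i"
    then show "s i j = 0" using L unfolding s_def by auto
  next
    fix i assume i: "i \<in> {1..k}"
    have "(LEAST j. j \<in> R i) \<in> R i" using L[OF i] .
    then have "(LEAST j. j \<in> R i) \<in> {1..n}" using R i by blast
    then show "(\<Sum>j\<in>{1..n}. s i j) = 1" using i unfolding s_def
      by (simp add: sum.delta')
  qed
  then show ?thesis by auto
qed

end



definition Mq :: "nat \<Rightarrow> nat \<Rightarrow> (nat \<Rightarrow> real) \<Rightarrow> real" where
  "Mq n q x = Max ((\<lambda>S. Min (x ` S)) ` {S. S \<subseteq> {1..n} \<and> card S = q})"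

definition Nc :: "nat \<Rightarrow> (nat \<Rightarrow> real) \<Rightarrow> real \<Rightarrow> nat" where
  "Nc n x v = card {j\<in>{1..n}. v \<le> x j}"

lemma fam_fin: "finite {S. S \<subseteq> {1..n::nat} \<and> card S = q}"
  by (rule finite_subset[of _ "Pow {1..n}"]) auto

lemma fam_ne: "q \<le> n \<Longrightarrow> {S. S \<subseteq> {1..n::nat} \<and> card S = q} \<noteq> {}"
  using obtain_subset_with_card_n[of q "{1..n}"] by auto

lemma Nc_le: "Nc n x v \<le> n"
proof -
  have "card {j\<in>{1..n}. v \<le> x j} \<le> card {1..n}" by (rule card_mono) auto
  then show ?thesis unfolding Nc_def by simp
qed

lemma Mq_ge:
  assumes "1 \<le> q" "q \<le> Nc n x v"
  shows "v \<le> Mq n q x"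
proof -
  obtain T where T: "T \<subseteq> {j\<in>{1..n}. v \<le> x j}" "card T = q"
    using obtain_subset_with_card_n[of q "{j\<in>{1..n}. v \<le> x j}"] assms(2) unfolding Nc_def by auto
  have Tf: "finite T" using T(1) by (rule finite_subset) auto
  have Tne: "T \<noteq> {}" using T(2) assms(1) by auto
  have "v \<le> Min (x ` T)" using T(1) Tf Tne by (auto simp: Min_ge_iff)
  also have "Min (x ` T) \<le> Mq n q x"
  proof -
    have "T \<in> {S. S \<subseteq> {1..n} \<and> card S = q}" using T by auto
    then show ?thesis unfolding Mq_def using fam_fin by (intro Max_ge) auto
  qed
  finally show ?thesis .
qed

lemma Mq_lt:
  assumes "q \<le> n" "Nc n x v < q"
  shows "Mq n q x < v"
proof -
  have "\<forall>a\<in>(\<lambda>S. Min (x ` S)) ` {S. S \<subseteq> {1..n} \<and> card S = q}. a < v"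
  proof
    fix a assume "a \<in> (\<lambda>S. Min (x ` S)) ` {S. S \<subseteq> {1..n} \<and> card S = q}"
    then obtain S where S: "S \<subseteq> {1..n}" "card S = q" "a = Min (x ` S)" by auto
    have Sf: "finite S" using S(1) by (rule finite_subset) auto
    have "\<exists>j\<in>S. x j < v"
    proof (rule ccontr)
      assume "\<not> ?thesis"
      then have "S \<subseteq> {j\<in>{1..n}. v \<le> x j}" using S(1) by force
      then have "card S \<le> Nc n x v" unfolding Nc_def by (intro card_mono) auto
      then show False using S(2) assms(2) by simp
    qed
    then obtain j where "j \<in> S" "x j < v" by blast
    then have "Min (x ` S) \<le> x j" using Sf by (intro Min_le) auto
    then show "a < v" using S(3) \<open>x j < v\<close> by simp
  qed
  then show ?thesis unfolding Mq_def using fam_fin fam_ne[OF assms(1)]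
    by (subst Max_less_iff) auto
qed

lemma Mq_mono:
  assumes "1 \<le> q" "q \<le> n" "v \<le> Mq n q x'" "\<And>u. v \<le> u \<Longrightarrow> Nc n x' u \<le> Nc n x u"
  shows "Mq n q x' \<le> Mq n q x"
proof -
  define t where "t = Mq n q x'"
  have "t \<in> (\<lambda>S. Min (x' ` S)) ` {S. S \<subseteq> {1..n} \<and> card S = q}"
    unfolding t_def Mq_def using fam_fin fam_ne[OF assms(2)] by (intro Max_in) auto
  then obtain S where S: "S \<subseteq> {1..n}" "card S = q" "t = Min (x' ` S)" by auto
  have Sf: "finite S" using S(1) by (rule finite_subset) auto
  have "\<forall>j\<in>S. t \<le> x' j" using S(3) Sf by (simp add: Min_le)
  then have "S \<subseteq> {j\<in>{1..n}. t \<le> x' j}" using S(1) by auto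
  then have "card S \<le> card {j\<in>{1..n}. t \<le> x' j}" by (intro card_mono) auto
  then have "q \<le> Nc n x' t" unfolding Nc_def using S(2) by simp
  also have "\<dots> \<le> Nc n x t" using assms(4) assms(3) t_def by simp
  finally have "t \<le> Mq n q x" using Mq_ge assms(1) by blast
  then show ?thesis unfolding t_def .
qed

lemma Mq_cont:
  fixes g :: "'a::topological_space \<Rightarrow> nat \<Rightarrow> real"
  assumes "1 \<le> q" "q \<le> n" "\<And>j. j \<in> {1..n} \<Longrightarrow> continuous_on UNIV (\<lambda>s. g s j)"
  shows "continuous_on UNIV (\<lambda>s. Mq n q (g s))"
  unfolding Mq_def
proof (rule cont_Max[OF fam_fin fam_ne[OF assms(2)]])
  fix S assume "S \<in> {S. S \<subseteq> {1..n} \<and> card S = q}"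
  then have S: "S \<subseteq> {1..n}" "card S = q" by auto
  have Sf: "finite S" using S(1) by (rule finite_subset) auto
  have Sne: "S \<noteq> {}" using S(2) assms(1) by auto
  show "continuous_on UNIV (\<lambda>s. Min (g s ` S))"
  proof (rule cont_Min[OF Sf Sne, where g="\<lambda>j s. g s j" and A=UNIV, simplified])
    fix j assume "j \<in> S" then show "continuous_on UNIV (\<lambda>s. g s j)" using assms(3) S(1) by blast
  qed
qed

context G begin

fun K :: "(nat \<Rightarrow> real \<Rightarrow> real) \<Rightarrow> nat \<Rightarrow> (nat\<Rightarrow>nat\<Rightarrow>real) set" where
  "K f 0 = P"
| "K f (Suc q) = {s \<in> K f q. \<forall>t\<in>K f q. Mq n (Suc q) (cc f s) \<le> Mq n (Suc q) (cc f t)}"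

lemma K_sub: "K f (Suc q) \<subseteq> K f q" by auto

lemma K_mono: "q \<le> q' \<Longrightarrow> K f q' \<subseteq> K f q"
  by (induction q' rule: dec_induct) (use K_sub in auto)

lemma K_P: "K f q \<subseteq> P" using K_mono[of 0 q f] by simp

lemma K_props:
  assumes fc: "\<forall>j\<in>{1..n}. continuous_on {0..} (f j)"
  shows "q \<le> n \<Longrightarrow> compact (K f q) \<and> K f q \<noteq> {}"
proof (induction q)
  case 0 then show ?case using P_compact P_nonempty by simp
next
  case (Suc q)
  define h where "h s = Mq n (Suc q) (cc f s)" for s
  have hc: "continuous_on UNIV h"
    unfolding h_def using Suc.prems fc cc_cont by (intro Mq_cont) auto
  have IH: "compact (K f q)" "K f q \<noteq> {}" using Suc by auto
  obtain s0 where s0: "s0 \<in> K f q" "\<forall>t\<in>K f q. h s0 \<le> h t"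
    using continuous_attains_inf[OF IH continuous_on_subset[OF hc]] by blast
  have eq: "K f (Suc q) = K f q \<inter> {s. h s \<le> h s0}"
    using s0 unfolding h_def by (auto intro: order_trans)
  have "closed {s. h s \<le> h s0}" by (rule closed_Collect_le[OF hc continuous_on_const])
  then have "compact (K f (Suc q))" unfolding eq by (rule compact_Int_closed[OF IH(1)])
  moreover have "s0 \<in> K f (Suc q)" unfolding eq using s0 by auto
  ultimately show ?case by auto
qed

lemma lex_key:
  assumes fc: "\<forall>j\<in>{1..n}. continuous_on {0..} (f j)"
    and s: "s \<in> K f n" and s': "s' \<in> P"
    and le: "\<And>u. v \<le> u \<Longrightarrow> Nc n (cc f s') u \<le> Nc n (cc f s) u"
    and lt: "Nc n (cc f s') v < Nc n (cc f s) v"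
  shows False
proof -
  define c where "c = Nc n (cc f s) v"
  have c1: "1 \<le> c" using lt c_def by simp
  have cn: "c \<le> n" unfolding c_def by (rule Nc_le)
  have claim: "q < c \<longrightarrow> s' \<in> K f q" for q
  proof (induction q)
    case 0 then show ?case using s' by simp
  next
    case (Suc q)
    show ?case
    proof
      assume q: "Suc q < c"
      then have s'q: "s' \<in> K f q" using Suc by simp
      have sSq: "s \<in> K f (Suc q)" using K_mono[of "Suc q" n f] s q cn by auto
      then have A: "Mq n (Suc q) (cc f s) \<le> Mq n (Suc q) (cc f s')" using s'q by auto
      have B: "v \<le> Mq n (Suc q) (cc f s)" using Mq_ge[of "Suc q" n "cc f s" v] q c_def by simp
      have "Mq n (Suc q) (cc f s') \<le> Mq n (Suc q) (cc f s)"
        using Mq_mono[of "Suc q" n v "cc f s'" "cc f s"] A B le q cn by simp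
      then show "s' \<in> K f (Suc q)" using sSq s'q by (auto intro: order_trans)
    qed
  qed
  obtain p where p: "c = Suc p" using c1 by (cases c) auto
  have "s' \<in> K f p" using claim[of p] p by simp
  moreover have "s \<in> K f (Suc p)" using K_mono[of "Suc p" n f] s p cn by auto
  ultimately have A: "Mq n c (cc f s) \<le> Mq n c (cc f s')" using p by auto
  have B: "v \<le> Mq n c (cc f s)" using Mq_ge[of c n "cc f s" v] c1 c_def by simp
  have C: "Mq n c (cc f s') < v" using Mq_lt[OF cn] lt c_def by simp
  show False using A B C by simp
qed

end



context G begin

lemma nash_P: "nash_eq n k f R w s \<Longrightarrow> s \<in> P"
  unfolding nash_eq_def P_def by blast

lemma nash_D: "nash_eq n k f R w s \<Longrightarrow> i \<in> {1..k} \<Longrightarrow> l \<in> {1..n} \<Longrightarrow> s i l > 0 \<Longrightarrow> j \<in> R i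
   \<Longrightarrow> cost k f R w s l \<le> cost k f R w s j"
  unfolding nash_eq_def by blast

lemma P_used_ex: assumes "s \<in> P" "i \<in> {1..k}" shows "\<exists>l. l \<in> {1..n} \<and> s i l > 0"
proof (rule ccontr)
  assume "\<not> ?thesis"
  then have "\<forall>l\<in>{1..n}. s i l \<le> 0" by auto
  then have "(\<Sum>l\<in>{1..n}. s i l) \<le> 0" by (intro sum_nonpos) auto
  then show False using P_D4[OF assms] by simp
qed

lemma tc:
  assumes ne: "nash_eq n k f R w s" and i: "i \<in> {1..k}"
  shows "\<And>j. j \<in> R i \<Longrightarrow> type_cost n k f R w s i \<le> cost k f R w s j"
    and "\<And>l. l \<in> {1..n} \<Longrightarrow> s i l > 0 \<Longrightarrow> type_cost n k f R w s i = cost k f R w s l"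
proof -
  have sP: "s \<in> P" using ne by (rule nash_P)
  define l1 where "l1 = (SOME l. l \<in> {1..n} \<and> s i l > 0)"
  have l1: "l1 \<in> {1..n}" "s i l1 > 0"
    using someI_ex[OF P_used_ex[OF sP i]] unfolding l1_def by blast+
  have tceq: "type_cost n k f R w s i = cost k f R w s l1"
    unfolding type_cost_def l1_def ..
  show "type_cost n k f R w s i \<le> cost k f R w s j" if "j \<in> R i" for j
    unfolding tceq using nash_D[OF ne i l1 that] .
  show "type_cost n k f R w s i = cost k f R w s l" if "l \<in> {1..n}" "s i l > 0" for l
  proof -
    have "l \<in> R i" using P_used_R[OF sP i that(2)] .
    moreover have "l1 \<in> R i" using P_used_R[OF sP i l1(2)] .
    ultimately show ?thesis unfolding tceq using nash_D[OF ne i l1] nash_D[OF ne i that] by (meson order_antisym)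
  qed
qed

lemma strong:
  assumes fmono: "\<forall>j\<in>{1..n}. mono_on {0..} (f j)"
    and fc: "\<forall>j\<in>{1..n}. continuous_on {0..} (f j)"
    and sK: "s \<in> K f n" and ne: "nash_eq n k f R w s"
  shows "strong_nash_eq n k f R w s"
proof -
  have sP: "s \<in> P" using ne by (rule nash_P)
  have "\<not> (\<exists>s'. consumption_profile n k R s' \<and> s' \<noteq> s \<and>
           (\<forall>i\<in>{1..k}. \<forall>l\<in>{1..n}. s' i l > s i l \<longrightarrow>
               cost k f R w s' l < type_cost n k f R w s i))"
  proof
    assume "\<exists>s'. consumption_profile n k R s' \<and> s' \<noteq> s \<and>
           (\<forall>i\<in>{1..k}. \<forall>l\<in>{1..n}. s' i l > s i l \<longrightarrow>
               cost k f R w s' l < type_cost n k f R w s i)"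
    then obtain s' where s'P: "s' \<in> P" and neq: "s' \<noteq> s"
      and dev: "\<And>i l. i\<in>{1..k} \<Longrightarrow> l\<in>{1..n} \<Longrightarrow> s' i l > s i l \<Longrightarrow>
               cost k f R w s' l < type_cost n k f R w s i"
      unfolding P_def by blast
    have incr: "cost k f R w s' b < cost k f R w s b" if a: "a \<in> {1..k}" and b: "b \<in> {1..n}" and gt: "s' a b > s a b" for a b
    proof -
      have "s' a b > 0" using gt P_nonneg[OF sP, of a b] by simp
      then have "b \<in> R a" using P_used_R[OF s'P a] by simp
      then show ?thesis using dev[OF a b gt] tc(1)[OF ne a] by fastforce
    qed
    have le: "cost k f R w s' b \<le> cost k f R w s b" if b: "b \<in> {1..n}" for b
    proof (cases "\<exists>a\<in>{1..k}. s' a b > s a b")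
      case True then show ?thesis using incr b by (meson less_imp_le)
    next
      case False
      have "ll s' b \<le> ll s b" unfolding ll_def
      proof (rule sum_mono)
        fix a assume a: "a \<in> {a \<in> {1..k}. b \<in> R a}"
        then have a1: "a \<in> {1..k}" and ab: "b \<in> R a" by auto
        have sm: "strict_mono_on {0..1} (w a b)" using wm a1 ab by blast
        have "s' a b \<le> s a b" using False a1 by (meson not_le)
        moreover have "s' a b \<in> {0..1}" "s a b \<in> {0..1}"
          using P_nonneg[OF s'P] P_le1[OF s'P] P_nonneg[OF sP] P_le1[OF sP] by auto
        ultimately have "w a b (s' a b) \<le> w a b (s a b)"
          using sm by (metis order_le_less strict_mono_onD)
        then show "w a b (clamp (s' a b)) \<le> w a b (clamp (s a b))"
          using \<open>s' a b \<in> {0..1}\<close> \<open>s a b \<in> {0..1}\<close> by (simp add: clamp_id)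
      qed
      then have "f b (ll s' b) \<le> f b (ll s b)"
        using fmono b ll_nonneg by (meson atLeast_iff mono_onD)
      then show ?thesis using cc_eq[OF sP] cc_eq[OF s'P] unfolding cc_def by metis
    qed
    obtain a b where ab: "s' a b \<noteq> s a b" using neq by (meson ext)
    have a: "a \<in> {1..k}" using ab P_D1[OF sP, of a b] P_D1[OF s'P, of a b] by force
    have "\<exists>b'. s' a b' > s a b'"
    proof (rule ccontr)
      assume "\<not> ?thesis"
      then have le': "\<forall>b'. s' a b' \<le> s a b'" by (meson not_le)
      then have "s' a b < s a b" using ab by (simp add: order_less_le)
      moreover have "b \<in> {1..n}" using ab P_D1[OF sP, of a b] P_D1[OF s'P, of a b] by force
      ultimately have "(\<Sum>b'\<in>{1..n}. s' a b') < (\<Sum>b'\<in>{1..n}. s a b')"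
        using le' by (intro sum_strict_mono_ex1) auto
      then show False using P_D4[OF sP a] P_D4[OF s'P a] by simp
    qed
    then obtain b0 where b0: "s' a b0 > s a b0" by blast
    have b0n: "b0 \<in> {1..n}" using b0 P_nonneg[OF sP, of a b0] P_D1[OF s'P, of a b0] by force
    have lt0: "cc f s' b0 < cc f s b0" using incr[OF a b0n b0] cc_eq[OF sP] cc_eq[OF s'P] by simp
    have leN: "Nc n (cc f s') u \<le> Nc n (cc f s) u" for u
      unfolding Nc_def
    proof (rule card_mono)
      show "{j \<in> {1..n}. u \<le> cc f s' j} \<subseteq> {j \<in> {1..n}. u \<le> cc f s j}"
        using le cc_eq[OF sP] cc_eq[OF s'P] by (auto intro: order_trans)
    qed simp
    have ltN: "Nc n (cc f s') (cc f s b0) < Nc n (cc f s) (cc f s b0)"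
      unfolding Nc_def
    proof (rule psubset_card_mono)
      show "{j \<in> {1..n}. cc f s b0 \<le> cc f s' j} \<subset> {j \<in> {1..n}. cc f s b0 \<le> cc f s j}"
      proof
        show "{j \<in> {1..n}. cc f s b0 \<le> cc f s' j} \<subseteq> {j \<in> {1..n}. cc f s b0 \<le> cc f s j}"
          using le cc_eq[OF sP] cc_eq[OF s'P] by (auto intro: order_trans)
        show "{j \<in> {1..n}. cc f s b0 \<le> cc f s' j} \<noteq> {j \<in> {1..n}. cc f s b0 \<le> cc f s j}"
          using b0n lt0 by (metis (no_types, lifting) mem_Collect_eq not_le order_refl)
      qed
    qed simp
    show False using lex_key[OF fc sK s'P leN ltN] .
  qed
  then show ?thesis unfolding strong_nash_eq_def using ne by blast
qed

end



context G begin

lemma NE_strict: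
  assumes fsm: "\<forall>j\<in>{1..n}. strict_mono_on {0..} (f j)"
    and fc: "\<forall>j\<in>{1..n}. continuous_on {0..} (f j)"
    and sK: "s \<in> K f n"
  shows "nash_eq n k f R w s"
proof -
  have sP: "s \<in> P" using sK K_P by blast
  have "cost k f R w s l \<le> cost k f R w s j"
    if i: "i \<in> {1..k}" and l: "l \<in> {1..n}" and pos: "s i l > 0" and j: "j \<in> R i" for i l j
  proof (rule ccontr)
    assume "\<not> ?thesis"
    then have jl: "cc f s j < cc f s l" using cc_eq[OF sP] by simp
    have jn: "j \<in> {1..n}" using j i R by blast
    have lR: "l \<in> R i" using P_used_R[OF sP i pos] .
    have jnl: "j \<noteq> l" using jl by auto
    define D where "D a b = (if a = i \<and> b = j then 1 else 0) - (if a = i \<and> b = l then 1 else (0::real))" for a b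
    define se where "se e = (\<lambda>a b. s a b + e * D a b)" for e :: real
    have se0: "se 0 = s" unfolding se_def by simp
    have se_cont: "continuous_on UNIV se"
      unfolding se_def
      by (intro continuous_on_coordinatewise_then_product continuous_intros)
    have gcont: "continuous_on UNIV (\<lambda>e. cc f (se e) j)"
      using continuous_on_compose2[OF cc_cont[of f j] se_cont] fc jn by auto
    have "((\<lambda>e. cc f (se e) j) \<longlongrightarrow> cc f (se 0) j) (at_right 0)"
      using gcont by (metis continuous_on_def UNIV_I tendsto_within_subset subset_UNIV)
    then have ev1: "eventually (\<lambda>e. cc f (se e) j < cc f s l) (at_right 0)"
      using jl se0 by (simp add: order_tendstoD(2))
    have ev2: "eventually (\<lambda>e. e \<in> {0<..<s i l}) (at_right 0)"
      using eventually_at_right_real[OF pos] .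
    obtain e where e1: "cc f (se e) j < cc f s l" and e2: "e \<in> {0<..<s i l}"
      using eventually_happens'[OF trivial_limit_at_right_real eventually_conj[OF ev1 ev2]] by blast
    have Dl: "D i l = -1" and Dj: "D i j = 1" unfolding D_def using jnl by auto
    have Doth: "D a b = 0" if "a \<noteq> i \<or> (b \<noteq> j \<and> b \<noteq> l)" for a b
      unfolding D_def using that by auto
    have seP: "se e \<in> P" unfolding P_def mem_Collect_eq
    proof (rule cp_I)
      fix a b assume "se e a b \<noteq> 0"
      then have "s a b \<noteq> 0 \<or> D a b \<noteq> 0" unfolding se_def by auto
      then show "a \<in> {1..k} \<and> b \<in> {1..n}"
      proof
        assume "s a b \<noteq> 0" then show ?thesis using P_D1[OF sP] by blast
      next
        assume "D a b \<noteq> 0" then have "a = i" "b = j \<or> b = l" using Doth by blast+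
        then show ?thesis using i jn l by blast
      qed
    next
      fix a b assume a: "a \<in> {1..k}" and b: "b \<in> {1..n}"
      show "0 \<le> se e a b"
      proof (cases "a = i \<and> b = l")
        case True then show ?thesis using e2 Dl unfolding se_def by auto
      next
        case False
        have "D a b \<ge> 0" unfolding D_def using False by auto
        then show ?thesis unfolding se_def using P_nonneg[OF sP, of a b] e2 by simp
      qed
    next
      fix a b assume a: "a \<in> {1..k}" and b: "b \<in> {1..n}" and bR: "b \<notin> R a"
      have "b \<noteq> j \<or> a \<noteq> i" using bR j by blast
      moreover have "b \<noteq> l \<or> a \<noteq> i" using bR lR by blast
      ultimately have "D a b = 0" using Doth by blast
      then show "se e a b = 0" unfolding se_def using P_D3[OF sP a bR] by simp
    next
      fix a assume a: "a \<in> {1..k}"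
      have "(\<Sum>b\<in>{1..n}. se e a b) = (\<Sum>b\<in>{1..n}. s a b) + e * (\<Sum>b\<in>{1..n}. D a b)"
        unfolding se_def by (simp add: sum.distrib sum_distrib_left)
      moreover have "(\<Sum>b\<in>{1..n}. D a b) = 0"
        unfolding D_def using jn l by (cases "a = i") (simp_all add: sum_subtractf sum.delta)
      ultimately show "(\<Sum>b\<in>{1..n}. se e a b) = 1" using P_D4[OF sP a] by simp
    qed
    have same: "cc f (se e) b = cc f s b" if "b \<noteq> j" "b \<noteq> l" for b
    proof -
      have "ll (se e) b = ll s b" unfolding ll_def se_def using Doth that by simp
      then show ?thesis unfolding cc_def by simp
    qed
    have lless: "cc f (se e) l < cc f s l"
    proof -
      have iin: "i \<in> {a\<in>{1..k}. l \<in> R a}" using i lR by blast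
      have fin: "finite {a\<in>{1..k}. l \<in> R a}" by simp
      have "ll (se e) l = w i l (clamp (se e i l)) + (\<Sum>a\<in>{a\<in>{1..k}. l \<in> R a} - {i}. w a l (clamp (se e a l)))"
        unfolding ll_def using sum.remove[OF fin iin] by simp
      also have "(\<Sum>a\<in>{a\<in>{1..k}. l \<in> R a} - {i}. w a l (clamp (se e a l))) = (\<Sum>a\<in>{a\<in>{1..k}. l \<in> R a} - {i}. w a l (clamp (s a l)))"
        unfolding se_def using Doth by (intro sum.cong) auto
      also have "w i l (clamp (se e i l)) < w i l (clamp (s i l))"
      proof -
        have "se e i l = s i l - e" unfolding se_def using Dl by simp
        moreover have "s i l \<in> {0..1}" using P_nonneg[OF sP] P_le1[OF sP] by auto
        moreover have "s i l - e \<in> {0..1}" using e2 P_le1[OF sP, of i l] by auto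
        moreover have "strict_mono_on {0..1} (w i l)" using wm i lR by blast
        ultimately show ?thesis using e2 by (simp add: clamp_id strict_mono_onD)
      qed
      finally have "ll (se e) l < ll s l"
        unfolding ll_def using sum.remove[OF fin iin, of "\<lambda>a. w a l (clamp (s a l))"] by simp
      moreover have "strict_mono_on {0..} (f l)" using fsm l by blast
      ultimately show ?thesis unfolding cc_def using ll_nonneg by (simp add: strict_mono_onD)
    qed
    define v where "v = cc f s l"
    have leN: "Nc n (cc f (se e)) u \<le> Nc n (cc f s) u" if "v \<le> u" for u
      unfolding Nc_def
    proof (rule card_mono)
      show "{b \<in> {1..n}. u \<le> cc f (se e) b} \<subseteq> {b \<in> {1..n}. u \<le> cc f s b}"
      proof
        fix b assume b: "b \<in> {b \<in> {1..n}. u \<le> cc f (se e) b}"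
        then have "b \<noteq> j" using e1 that v_def by auto
        moreover have "b \<noteq> l" using b lless that v_def by auto
        ultimately show "b \<in> {b \<in> {1..n}. u \<le> cc f s b}" using b same by auto
      qed
    qed simp
    have ltN: "Nc n (cc f (se e)) v < Nc n (cc f s) v"
      unfolding Nc_def
    proof (rule psubset_card_mono)
      show "{b \<in> {1..n}. v \<le> cc f (se e) b} \<subset> {b \<in> {1..n}. v \<le> cc f s b}"
      proof
        show "{b \<in> {1..n}. v \<le> cc f (se e) b} \<subseteq> {b \<in> {1..n}. v \<le> cc f s b}"
        proof
          fix b assume b: "b \<in> {b \<in> {1..n}. v \<le> cc f (se e) b}"
          then have "b \<noteq> j" using e1 v_def by auto
          moreover have "b \<noteq> l" using b lless v_def by auto
          ultimately show "b \<in> {b \<in> {1..n}. v \<le> cc f s b}" using b same by auto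
        qed
        have "l \<in> {b \<in> {1..n}. v \<le> cc f s b}" using l v_def by simp
        moreover have "l \<notin> {b \<in> {1..n}. v \<le> cc f (se e) b}" using lless v_def by simp
        ultimately show "{b \<in> {1..n}. v \<le> cc f (se e) b} \<noteq> {b \<in> {1..n}. v \<le> cc f s b}" by blast
      qed
    qed simp
    show False using lex_key[OF fc sK seP leN ltN] .
  qed
  then show ?thesis unfolding nash_eq_def P_def using sP unfolding P_def by blast
qed

end



context G begin

lemma exists_strict:
  assumes fsm: "\<forall>j\<in>{1..n}. strict_mono_on {0..} (f j)"
    and fc: "\<forall>j\<in>{1..n}. continuous_on {0..} (f j)"
  shows "\<exists>s. strong_nash_eq n k f R w s"
proof -
  obtain s where sK: "s \<in> K f n" using K_props[OF fc, of n] by auto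
  have ne: "nash_eq n k f R w s" by (rule NE_strict[OF fsm fc sK])
  have fm: "\<forall>j\<in>{1..n}. mono_on {0..} (f j)" using fsm strict_mono_on_imp_mono_on by blast
  show ?thesis using strong[OF fm fc sK ne] by blast
qed

definition fe :: "real \<Rightarrow> (nat \<Rightarrow> real \<Rightarrow> real) \<Rightarrow> nat \<Rightarrow> real \<Rightarrow> real" where
  "fe e f j x = f j x + e * x"

lemma cc_fe: "cc (fe e f) x j = cc f x j + e * ll x j"
  unfolding cc_def fe_def by simp

lemma fe_strict:
  assumes "\<forall>j\<in>{1..n}. mono_on {0..} (f j)" "e > 0"
  shows "\<forall>j\<in>{1..n}. strict_mono_on {0..} (fe e f j)"
proof
  fix j assume j: "j \<in> {1..n}"
  show "strict_mono_on {0..} (fe e f j)"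
  proof (rule strict_mono_onI)
    fix x y :: real assume "x \<in> {0..}" "y \<in> {0..}" "x < y"
    moreover have "f j x \<le> f j y" using assms(1) j calculation by (meson mono_onD less_imp_le)
    ultimately show "fe e f j x < fe e f j y" unfolding fe_def using assms(2) by (simp add: add_le_less_mono)
  qed
qed

lemma fe_cont:
  assumes "\<forall>j\<in>{1..n}. continuous_on {0..} (f j)"
  shows "\<forall>j\<in>{1..n}. continuous_on {0..} (fe e f j)"
  unfolding fe_def using assms by (auto intro!: continuous_intros)

lemma exists_general:
  assumes fm: "\<forall>j\<in>{1..n}. mono_on {0..} (f j)"
    and fc: "\<forall>j\<in>{1..n}. continuous_on {0..} (f j)"
  shows "\<exists>s. strong_nash_eq n k f R w s"
proof -
  define ee where "ee m = inverse (real (Suc m))" for m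
  have "\<forall>m. \<exists>s. strong_nash_eq n k (fe (ee m) f) R w s"
  proof
    fix m have "ee m > 0" unfolding ee_def by simp
    then show "\<exists>s. strong_nash_eq n k (fe (ee m) f) R w s"
      using exists_strict[OF fe_strict[OF fm] fe_cont[OF fc]] by blast
  qed
  then obtain sq where sq: "\<And>m. strong_nash_eq n k (fe (ee m) f) R w (sq m)" by metis
  have sqP: "\<And>m. sq m \<in> P" using sq unfolding strong_nash_eq_def using nash_P by blast
  obtain s r where sP: "s \<in> P" and r: "strict_mono r" and lim: "(sq \<circ> r) \<longlonglongrightarrow> s"
    using seq_compactE[OF compact_imp_seq_compact[OF P_compact]] sqP by metis
  define t where "t m = sq (r m)" for m
  define e' where "e' m = ee (r m)" for m
  have tlim: "t \<longlonglongrightarrow> s" using lim unfolding t_def comp_def .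
  have e'lim: "e' \<longlonglongrightarrow> 0"
    using LIMSEQ_subseq_LIMSEQ[OF LIMSEQ_inverse_real_of_nat r] unfolding e'_def ee_def comp_def .
  have tstrong: "\<And>m. strong_nash_eq n k (fe (e' m) f) R w (t m)" using sq unfolding t_def e'_def .
  have tne: "\<And>m. nash_eq n k (fe (e' m) f) R w (t m)" using tstrong unfolding strong_nash_eq_def by blast
  have tP: "\<And>m. t m \<in> P" using sqP unfolding t_def .
  have coord: "\<And>a b. (\<lambda>m. t m a b) \<longlonglongrightarrow> s a b" using tendsto_univ[OF coord_cont tlim] .
  have gen: "(\<lambda>m. cc (fe (e' m) f) (\<Psi> (t m)) j) \<longlonglongrightarrow> cc f (\<Psi> s) j"
    if \<Psi>: "continuous_on UNIV \<Psi>" and j: "j \<in> {1..n}" for \<Psi> :: "(nat\<Rightarrow>nat\<Rightarrow>real) \<Rightarrow> (nat\<Rightarrow>nat\<Rightarrow>real)" and j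
  proof -
    have c1: "continuous_on UNIV (\<lambda>x. cc f (\<Psi> x) j)"
      using continuous_on_compose2[OF cc_cont[of f j] \<Psi>] fc j by auto
    have c2: "continuous_on UNIV (\<lambda>x. ll (\<Psi> x) j)"
      using continuous_on_compose2[OF ll_cont[of j] \<Psi>] by auto
    have 1: "(\<lambda>m. cc f (\<Psi> (t m)) j) \<longlonglongrightarrow> cc f (\<Psi> s) j" using tendsto_univ[OF c1 tlim] .
    have 2: "(\<lambda>m. ll (\<Psi> (t m)) j) \<longlonglongrightarrow> ll (\<Psi> s) j" using tendsto_univ[OF c2 tlim] .
    have "(\<lambda>m. cc f (\<Psi> (t m)) j + e' m * ll (\<Psi> (t m)) j) \<longlonglongrightarrow> cc f (\<Psi> s) j + 0 * ll (\<Psi> s) j"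
      by (intro tendsto_intros 1 2 e'lim)
    then show ?thesis by (simp add: cc_fe)
  qed
  have T3: "(\<lambda>m. cc (fe (e' m) f) (t m) j) \<longlonglongrightarrow> cc f s j" if "j \<in> {1..n}" for j
    using gen[of "\<lambda>x. x" j] that continuous_on_id by simp
  have sne: "nash_eq n k f R w s"
    unfolding nash_eq_def
  proof (intro conjI ballI impI)
    show "consumption_profile n k R s" using sP unfolding P_def by simp
    fix i l j assume i: "i \<in> {1..k}" and l: "l \<in> {1..n}" and pos: "0 < s i l" and j: "j \<in> R i"
    have jn: "j \<in> {1..n}" using R i j by blast
    have ev: "eventually (\<lambda>m. t m i l > 0) sequentially" using order_tendstoD(1)[OF coord pos] .
    have "eventually (\<lambda>m. cc (fe (e' m) f) (t m) l \<le> cc (fe (e' m) f) (t m) j) sequentially"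
      using ev
    proof (rule eventually_mono)
      fix m assume "t m i l > 0"
      then show "cc (fe (e' m) f) (t m) l \<le> cc (fe (e' m) f) (t m) j"
        using nash_D[OF tne i l _ j] cc_eq[OF tP] by simp
    qed
    then have "cc f s l \<le> cc f s j" using tendsto_le[OF sequentially_bot T3[OF jn] T3[OF l]] by simp
    then show "cost k f R w s l \<le> cost k f R w s j" using cc_eq[OF sP] by simp
  qed
  have "strong_nash_eq n k f R w s"
    unfolding strong_nash_eq_def
  proof (intro conjI notI)
    show "nash_eq n k f R w s" by (rule sne)
    assume "\<exists>s'. consumption_profile n k R s' \<and> s' \<noteq> s \<and>
           (\<forall>i\<in>{1..k}. \<forall>l\<in>{1..n}. s' i l > s i l \<longrightarrow>
               cost k f R w s' l < type_cost n k f R w s i)"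
    then obtain s' where s'P: "s' \<in> P" and neq: "s' \<noteq> s"
      and dev: "\<And>a b. a\<in>{1..k} \<Longrightarrow> b\<in>{1..n} \<Longrightarrow> s' a b > s a b \<Longrightarrow>
               cost k f R w s' b < type_cost n k f R w s a"
      unfolding P_def by blast
    define A where "A = {p. fst p \<in> {1..k} \<and> snd p \<in> {1..n} \<and> s' (fst p) (snd p) > s (fst p) (snd p)}"
    have Afin: "finite A"
      by (rule finite_subset[of _ "{1..k} \<times> {1..n}"]) (auto simp: A_def mem_Times_iff)
    define \<Phi> where "\<Phi> \<tau> = (\<lambda>a b. s a b + \<tau> * (s' a b - s a b))" for \<tau> :: real
    have \<Phi>c: "continuous_on UNIV \<Phi>" unfolding \<Phi>_def
      by (intro continuous_on_coordinatewise_then_product continuous_intros)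
    have \<Phi>1: "\<Phi> 1 = s'" unfolding \<Phi>_def by simp
    define l0 where "l0 a = (SOME l. l \<in> {1..n} \<and> s a l > 0)" for a
    have l0: "l0 a \<in> {1..n} \<and> s a (l0 a) > 0" if "a \<in> {1..k}" for a
      using someI_ex[OF P_used_ex[OF sP that]] unfolding l0_def .
    have tcs: "type_cost n k f R w s a = cc f s (l0 a)" if a: "a \<in> {1..k}" for a
      using tc(2)[OF sne a] l0[OF a] cc_eq[OF sP] by simp
    have evA: "eventually (\<lambda>\<tau>. \<forall>p\<in>A. cc f (\<Phi> \<tau>) (snd p) < cc f s (l0 (fst p))) (at_left 1)"
    proof (rule eventually_ball_finite[OF Afin], rule ballI)
      fix p assume p: "p \<in> A"
      then have a: "fst p \<in> {1..k}" and b: "snd p \<in> {1..n}" and gt: "s' (fst p) (snd p) > s (fst p) (snd p)"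
        unfolding A_def by auto
      have gc: "continuous_on UNIV (\<lambda>\<tau>. cc f (\<Phi> \<tau>) (snd p))"
        using continuous_on_compose2[OF cc_cont[of f "snd p"] \<Phi>c] fc b by auto
      have "((\<lambda>\<tau>. cc f (\<Phi> \<tau>) (snd p)) \<longlongrightarrow> cc f (\<Phi> 1) (snd p)) (at_left 1)"
        using gc by (metis continuous_on_def UNIV_I tendsto_within_subset subset_UNIV)
      moreover have "cc f (\<Phi> 1) (snd p) < cc f s (l0 (fst p))"
        using dev[OF a b gt] tcs[OF a] cc_eq[OF s'P] \<Phi>1 by simp
      ultimately show "eventually (\<lambda>\<tau>. cc f (\<Phi> \<tau>) (snd p) < cc f s (l0 (fst p))) (at_left 1)"
        by (rule order_tendstoD(2))
    qed
    have ev01: "eventually (\<lambda>\<tau>. \<tau> \<in> {0<..<1}) (at_left (1::real))" by (rule eventually_at_left_real) simp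
    obtain \<tau> where \<tau>A: "\<forall>p\<in>A. cc f (\<Phi> \<tau>) (snd p) < cc f s (l0 (fst p))" and \<tau>01: "\<tau> \<in> {0<..<1}"
      using eventually_happens'[OF trivial_limit_at_left_real eventually_conj[OF evA ev01]] by blast
    define \<Psi> where "\<Psi> x = (\<lambda>a b. x a b + \<tau> * (s' a b - s a b))" for x :: "nat\<Rightarrow>nat\<Rightarrow>real"
    have \<Psi>c: "continuous_on UNIV \<Psi>" unfolding \<Psi>_def
      by (intro continuous_on_coordinatewise_then_product continuous_intros coord_cont)
    have \<Psi>s: "\<Psi> s = \<Phi> \<tau>" unfolding \<Psi>_def \<Phi>_def ..
    define B where "B = {1..k} \<times> {1..n}"
    have Bfin: "finite B" unfolding B_def by simp
    have E1: "eventually (\<lambda>m. \<Psi> (t m) \<in> P) sequentially"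
    proof -
      have "eventually (\<lambda>m. \<forall>p\<in>B. s' (fst p) (snd p) < s (fst p) (snd p) \<longrightarrow>
                t m (fst p) (snd p) > \<tau> * (s (fst p) (snd p) - s' (fst p) (snd p))) sequentially"
      proof (rule eventually_ball_finite[OF Bfin], rule ballI)
        fix p assume "p \<in> B"
        show "eventually (\<lambda>m. s' (fst p) (snd p) < s (fst p) (snd p) \<longrightarrow>
                t m (fst p) (snd p) > \<tau> * (s (fst p) (snd p) - s' (fst p) (snd p))) sequentially"
        proof (cases "s' (fst p) (snd p) < s (fst p) (snd p)")
          case True
          have "\<tau> * (s (fst p) (snd p) - s' (fst p) (snd p)) < s (fst p) (snd p) - s' (fst p) (snd p)"
            using True \<tau>01 by (simp add: mult_less_cancel_right1)
          also have "\<dots> \<le> s (fst p) (snd p)" using P_nonneg[OF s'P] by simp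
          finally have "eventually (\<lambda>m. t m (fst p) (snd p) > \<tau> * (s (fst p) (snd p) - s' (fst p) (snd p))) sequentially"
            using order_tendstoD(1)[OF coord] by blast
          then show ?thesis by (rule eventually_mono) simp
        next
          case False then show ?thesis by simp
        qed
      qed
      then show ?thesis
      proof (rule eventually_mono)
        fix m assume H: "\<forall>p\<in>B. s' (fst p) (snd p) < s (fst p) (snd p) \<longrightarrow>
                t m (fst p) (snd p) > \<tau> * (s (fst p) (snd p) - s' (fst p) (snd p))"
        have tm: "t m \<in> P" by (rule tP)
        show "\<Psi> (t m) \<in> P" unfolding P_def mem_Collect_eq
        proof (rule cp_I)
          fix a b assume "\<Psi> (t m) a b \<noteq> 0"
          then have "t m a b \<noteq> 0 \<or> s' a b \<noteq> 0 \<or> s a b \<noteq> 0" unfolding \<Psi>_def by auto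
          then show "a \<in> {1..k} \<and> b \<in> {1..n}" using P_D1[OF tm] P_D1[OF s'P] P_D1[OF sP] by blast
        next
          fix a b assume a: "a \<in> {1..k}" and b: "b \<in> {1..n}"
          show "0 \<le> \<Psi> (t m) a b"
          proof (cases "s' a b < s a b")
            case True
            then have "t m a b > \<tau> * (s a b - s' a b)" using H a b unfolding B_def by auto
            then show ?thesis unfolding \<Psi>_def by (simp add: algebra_simps)
          next
            case False
            then have "\<tau> * (s' a b - s a b) \<ge> 0" using \<tau>01 by simp
            then show ?thesis unfolding \<Psi>_def using P_nonneg[OF tm, of a b] by simp
          qed
        next
          fix a b assume a: "a \<in> {1..k}" and b: "b \<in> {1..n}" and bR: "b \<notin> R a"
          show "\<Psi> (t m) a b = 0" unfolding \<Psi>_def using P_D3[OF tm a bR] P_D3[OF s'P a bR] P_D3[OF sP a bR] by simp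
        next
          fix a assume a: "a \<in> {1..k}"
          have "(\<Sum>b\<in>{1..n}. \<Psi> (t m) a b) = (\<Sum>b\<in>{1..n}. t m a b) + \<tau> * ((\<Sum>b\<in>{1..n}. s' a b) - (\<Sum>b\<in>{1..n}. s a b))"
            unfolding \<Psi>_def by (simp add: sum.distrib sum_distrib_left sum_subtractf algebra_simps)
          then show "(\<Sum>b\<in>{1..n}. \<Psi> (t m) a b) = 1" using P_D4[OF tm a] P_D4[OF s'P a] P_D4[OF sP a] by simp
        qed
      qed
    qed
    have E2: "eventually (\<lambda>m. \<forall>p\<in>A. cc (fe (e' m) f) (\<Psi> (t m)) (snd p) < type_cost n k (fe (e' m) f) R w (t m) (fst p)) sequentially"
    proof (rule eventually_ball_finite[OF Afin], rule ballI)
      fix p assume p: "p \<in> A"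
      then have a: "fst p \<in> {1..k}" and b: "snd p \<in> {1..n}" unfolding A_def by auto
      define \<alpha> where "\<alpha> = cc f (\<Phi> \<tau>) (snd p)"
      define \<beta> where "\<beta> = cc f s (l0 (fst p))"
      have ab: "\<alpha> < \<beta>" using \<tau>A p unfolding \<alpha>_def \<beta>_def by blast
      have L: "(\<lambda>m. cc (fe (e' m) f) (\<Psi> (t m)) (snd p)) \<longlonglongrightarrow> \<alpha>"
        using gen[OF \<Psi>c b] \<Psi>s unfolding \<alpha>_def by simp
      have l0a: "l0 (fst p) \<in> {1..n}" "s (fst p) (l0 (fst p)) > 0" using l0[OF a] by auto
      have Rr: "(\<lambda>m. cc (fe (e' m) f) (t m) (l0 (fst p))) \<longlonglongrightarrow> \<beta>"
        using T3[OF l0a(1)] unfolding \<beta>_def .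
      have e1: "eventually (\<lambda>m. cc (fe (e' m) f) (\<Psi> (t m)) (snd p) < (\<alpha> + \<beta>) / 2) sequentially"
        by (rule order_tendstoD(2)[OF L]) (use ab in \<open>simp add: field_simps\<close>)
      have e2: "eventually (\<lambda>m. cc (fe (e' m) f) (t m) (l0 (fst p)) > (\<alpha> + \<beta>) / 2) sequentially"
        by (rule order_tendstoD(1)[OF Rr]) (use ab in \<open>simp add: field_simps\<close>)
      have e3: "eventually (\<lambda>m. t m (fst p) (l0 (fst p)) > 0) sequentially"
        using order_tendstoD(1)[OF coord l0a(2)] .
      show "eventually (\<lambda>m. cc (fe (e' m) f) (\<Psi> (t m)) (snd p) < type_cost n k (fe (e' m) f) R w (t m) (fst p)) sequentially"
        using eventually_conj[OF e1 eventually_conj[OF e2 e3]]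
      proof (rule eventually_mono)
        fix m assume H: "cc (fe (e' m) f) (\<Psi> (t m)) (snd p) < (\<alpha> + \<beta>) / 2 \<and>
             (\<alpha> + \<beta>) / 2 < cc (fe (e' m) f) (t m) (l0 (fst p)) \<and> 0 < t m (fst p) (l0 (fst p))"
        have "type_cost n k (fe (e' m) f) R w (t m) (fst p) = cost k (fe (e' m) f) R w (t m) (l0 (fst p))"
          using tc(2)[OF tne a l0a(1)] H by simp
        also have "\<dots> = cc (fe (e' m) f) (t m) (l0 (fst p))" using cc_eq[OF tP] by simp
        finally show "cc (fe (e' m) f) (\<Psi> (t m)) (snd p) < type_cost n k (fe (e' m) f) R w (t m) (fst p)"
          using H by simp
      qed
    qed
    obtain m where m1: "\<Psi> (t m) \<in> P"
      and m2: "\<forall>p\<in>A. cc (fe (e' m) f) (\<Psi> (t m)) (snd p) < type_cost n k (fe (e' m) f) R w (t m) (fst p)"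
      using eventually_happens'[OF sequentially_bot eventually_conj[OF E1 E2]] by blast
    have "\<Psi> (t m) \<noteq> t m"
    proof
      assume eq: "\<Psi> (t m) = t m"
      obtain a b where "s' a b \<noteq> s a b" using neq by (meson ext)
      moreover have "\<Psi> (t m) a b = t m a b" using eq by simp
      ultimately show False unfolding \<Psi>_def using \<tau>01 by simp
    qed
    moreover have "\<forall>i\<in>{1..k}. \<forall>l\<in>{1..n}. \<Psi> (t m) i l > t m i l \<longrightarrow>
               cost k (fe (e' m) f) R w (\<Psi> (t m)) l < type_cost n k (fe (e' m) f) R w (t m) i"
    proof (intro ballI impI)
      fix i l assume i: "i \<in> {1..k}" and l: "l \<in> {1..n}" and gt: "\<Psi> (t m) i l > t m i l"
      then have "\<tau> * (s' i l - s i l) > 0" unfolding \<Psi>_def by simp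
      then have "s' i l > s i l" using \<tau>01 by (simp add: zero_less_mult_iff)
      then have "(i, l) \<in> A" unfolding A_def using i l by simp
      then show "cost k (fe (e' m) f) R w (\<Psi> (t m)) l < type_cost n k (fe (e' m) f) R w (t m) i"
        using m2 cc_eq[OF m1] by fastforce
    qed
    ultimately show False using tstrong[of m] m1 unfolding strong_nash_eq_def P_def by blast
  qed
  then show ?thesis by blast
qed

end

theorem mainTheorem5:
  fixes n k :: nat and f :: "nat \<Rightarrow> real \<Rightarrow> real" and R :: "nat \<Rightarrow> nat set"
    and w :: "nat \<Rightarrow> nat \<Rightarrow> real \<Rightarrow> real"
  assumes "rsg_game n k f R w"
    and "\<forall>j\<in>{1..n}. continuous_on {0..} (f j)"
    and "\<forall>i\<in>{1..k}. \<forall>j\<in>R i. continuous_on {0..1} (w i j)"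
  shows "\<exists>s. strong_nash_eq n k f R w s"
proof -
  have g: "(\<forall>j\<in>{1..n}. mono_on {0..} (f j))" "\<forall>i\<in>{1..k}. R i \<noteq> {} \<and> R i \<subseteq> {1..n}"
     "\<forall>i\<in>{1..k}. \<forall>j\<in>R i. strict_mono_on {0..1} (w i j) \<and> (\<forall>x\<in>{0..1}. w i j x \<ge> 0)"
    using assms(1) unfolding rsg_game_def by blast+
  interpret G n k R w using g(2,3) assms(3) by unfold_locales
  show ?thesis by (rule exists_general[OF g(1) assms(2)])
qed

end
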